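(* Let $m\in\mathbb{N}$ be odd and divisible by $3$. Then the friendship graph $F_j$ is $\mathbb{Z}_m$-cordial for every integer $j$ with $\frac{2m}{3}\le j\le m$.
   Context: Graphs are finite, simple and undirected. For $n\in\mathbb{N}$, the friendship graph $F_n$ is the union of $n$ copies of the triangle $C_3$ joined at a single common (central) vertex. For an abelian group $A$ and a graph $G=(V,E)$, a vertex labeling $\ell:V\to A$ induces an edge labeling $\ell(\{v_1,v_2\})=\ell(v_1)+\ell(v_2)$. Let $f_V(a)=|\{v\in V:\ell(v)=a\}|$ and $f_E(a)=|\{e\in E:\ell(e)=a\}|$. The labeling is $A$-cordial if $|f_V(a_1)-f_V(a_2)|\le 1$ and $|f_E(a_1)-f_E(a_2)|\le 1$ for all $a_1,a_2\in A$; $G$ is $A$-cordial if it admits an $A$-cordial labeling. *)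

theory Defs
  imports Main
begin

text \<open>A graph is given by a vertex set V and an edge set E of 2-element subsets of V.
  Z_m is represented by the residues {0..<m} with addition mod m.\<close>

definition Zm_cordial :: "nat \<Rightarrow> 'a set \<Rightarrow> 'a set set \<Rightarrow> bool" where
  "Zm_cordial m V E \<longleftrightarrow>
     (\<exists>l :: 'a \<Rightarrow> nat. (\<forall>v\<in>V. l v < m) \<and>
        (\<forall>a1<m. \<forall>a2<m.
           \<bar>int (card {v\<in>V. l v = a1}) - int (card {v\<in>V. l v = a2})\<bar> \<le> 1 \<and>
           \<bar>int (card {e\<in>E. (\<Sum>v\<in>e. l v) mod m = a1})
              - int (card {e\<in>E. (\<Sum>v\<in>e. l v) mod m = a2})\<bar> \<le> 1))"

definition friendship_V :: "nat \<Rightarrow> nat set" where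
  "friendship_V n = {0..2*n}"

definition friendship_E :: "nat \<Rightarrow> nat set set" where
  "friendship_E n = (\<Union>i\<in>{1..n}. {{0, 2*i-1}, {0, 2*i}, {2*i-1, 2*i}})"

end

theory Submission
  imports Defs "HOL-Library.Multiset"
begin

lemma card_filter_sum: "finite A \<Longrightarrow> card {x\<in>A. P x} = (\<Sum>x\<in>A. if P x then 1 else 0)"
  by (simp add: sum.inter_filter[symmetric])

definition lab :: "nat \<Rightarrow> (nat \<times> nat) list \<Rightarrow> nat \<Rightarrow> nat" where
  "lab m L v = (if v = 0 then 0 else if odd v then fst (L ! (v div 2)) mod m
                else snd (L ! (v div 2 - 1)) mod m)"

definition vm :: "nat \<Rightarrow> (nat \<times> nat) list \<Rightarrow> nat multiset" where
  "vm m L = add_mset 0 (mset (map (\<lambda>p. fst p mod m) L) + mset (map (\<lambda>p. snd p mod m) L))"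

definition em :: "nat \<Rightarrow> (nat \<times> nat) list \<Rightarrow> nat multiset" where
  "em m L = mset (map (\<lambda>p. fst p mod m) L) + mset (map (\<lambda>p. snd p mod m) L)
     + mset (map (\<lambda>p. (fst p + snd p) mod m) L)"

lemma lab_app: assumes "v \<le> 2 * length L" shows "lab m (L @ [p]) v = lab m L v"
proof -
  have o: "odd v \<Longrightarrow> v div 2 < length L" using assms by presburger
  have e: "even v \<Longrightarrow> 0 < v \<Longrightarrow> v div 2 - 1 < length L" using assms by presburger
  show ?thesis
  proof (cases "v = 0")
    case False
    show ?thesis
    proof (cases "odd v")
      case True
      then show ?thesis using False o by (simp add: lab_def nth_append)
    next
      case ev: False
      then show ?thesis using False e by (simp add: lab_def nth_append)
    qed
  qed (simp add: lab_def)
qed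

lemma lab_new1: "lab m (L @ [p]) (2 * length L + 1) = fst p mod m"
  unfolding lab_def by (simp add: nth_append)

lemma lab_new2: "lab m (L @ [p]) (2 * length L + 2) = snd p mod m"
  unfolding lab_def by (simp add: nth_append)

lemma card_V: "card {v \<in> friendship_V (length L). lab m L v = a} = count (vm m L) a"
proof (induction L rule: rev_induct)
  case Nil
  then show ?case by (simp add: friendship_V_def vm_def lab_def)
next
  case (snoc p L)
  let ?n = "length L"
  have V: "friendship_V (length (L @ [p])) = {0..Suc (Suc (2 * ?n))}"
    by (simp add: friendship_V_def)
  have "card {v \<in> friendship_V (length (L @ [p])). lab m (L @ [p]) v = a}
     = (\<Sum>v\<in>{0..Suc (Suc (2 * ?n))}. if lab m (L @ [p]) v = a then 1 else 0)"
    unfolding V by (rule card_filter_sum) simp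
  also have "\<dots> = (\<Sum>v\<in>{0..2 * ?n}. if lab m (L @ [p]) v = a then 1 else 0)
      + (if fst p mod m = a then 1 else 0) + (if snd p mod m = a then 1 else 0)"
    using lab_new1[of m L p] lab_new2[of m L p] by (simp add: sum.atLeast0_atMost_Suc)
  also have "(\<Sum>v\<in>{0..2 * ?n}. if lab m (L @ [p]) v = a then 1 else 0)
      = (\<Sum>v\<in>{0..2 * ?n}. if lab m L v = a then 1 else 0)"
    by (rule sum.cong) (auto simp: lab_app)
  also have "\<dots> = card {v \<in> friendship_V ?n. lab m L v = a}"
    unfolding friendship_V_def by (rule card_filter_sum[symmetric]) simp
  finally show ?case using snoc by (simp add: vm_def)
qed

lemma E_Suc: "friendship_E (Suc n) = friendship_E n \<union> {{0, 2*n+1}, {0, 2*n+2}, {2*n+1, 2*n+2}}"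
proof -
  have "{1..Suc n} = insert (Suc n) {1..n}" by auto
  then show ?thesis unfolding friendship_E_def by auto
qed

lemma E_sub: "e \<in> friendship_E n \<Longrightarrow> e \<subseteq> {0..2*n}"
  unfolding friendship_E_def by auto

lemma E_fin: "finite (friendship_E n)"
  unfolding friendship_E_def by auto

lemma card_E: "card {e \<in> friendship_E (length L). (\<Sum>v\<in>e. lab m L v) mod m = a} = count (em m L) a"
proof (induction L rule: rev_induct)
  case Nil
  then show ?case by (simp add: friendship_E_def em_def)
next
  case (snoc p L)
  let ?n = "length L"
  let ?N = "{{0, 2*?n+1}, {0, 2*?n+2}, {2*?n+1, 2*?n+2}} :: nat set set"
  let ?f = "\<lambda>L e. if (\<Sum>v\<in>e. lab m L v) mod m = a then 1 else (0::nat)"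
  let ?c = "(if fst p mod m = a then 1 else 0)
      + (if snd p mod m = a then 1 else 0) + (if (fst p + snd p) mod m = a then 1 else (0::nat))"
  have disj: "friendship_E ?n \<inter> ?N = {}"
    by (auto dest!: E_sub)
  have EE: "friendship_E (length (L @ [p])) = friendship_E ?n \<union> ?N" using E_Suc[of ?n] by simp
  have h1: "card {e \<in> friendship_E (length (L @ [p])). (\<Sum>v\<in>e. lab m (L @ [p]) v) mod m = a}
     = (\<Sum>e\<in>friendship_E ?n \<union> ?N. ?f (L @ [p]) e)"
    unfolding EE by (rule card_filter_sum) (simp add: E_fin)
  have h2: "(\<Sum>e\<in>friendship_E ?n \<union> ?N. ?f (L @ [p]) e) = (\<Sum>e\<in>friendship_E ?n. ?f (L @ [p]) e) + (\<Sum>e\<in>?N. ?f (L @ [p]) e)"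
    by (rule sum.union_disjoint[OF E_fin _ disj]) simp
  have h3: "(\<Sum>e\<in>friendship_E ?n. ?f (L @ [p]) e) = (\<Sum>e\<in>friendship_E ?n. ?f L e)"
  proof (rule sum.cong)
    fix e assume "e \<in> friendship_E ?n"
    then have "e \<subseteq> {0..2*?n}" by (rule E_sub)
    then have "(\<Sum>v\<in>e. lab m (L @ [p]) v) = (\<Sum>v\<in>e. lab m L v)"
      by (intro sum.cong) (auto simp: lab_app)
    then show "?f (L @ [p]) e = ?f L e" by simp
  qed simp
  have h4: "(\<Sum>e\<in>friendship_E ?n. ?f L e) = count (em m L) a"
    by (simp only: snoc[symmetric] card_filter_sum[OF E_fin])
  have h5: "(\<Sum>e\<in>?N. ?f (L @ [p]) e) = ?c"
  proof -
    have l0: "lab m (L @ [p]) 0 = 0" by (simp add: lab_def)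
    have s1: "(\<Sum>v\<in>{0, 2*?n+1}. lab m (L @ [p]) v) = fst p mod m"
      using lab_new1[of m L p] l0 by simp
    have s2: "(\<Sum>v\<in>{0, 2*?n+2}. lab m (L @ [p]) v) = snd p mod m"
      using lab_new2[of m L p] l0 by simp
    have s3: "(\<Sum>v\<in>{2*?n+1, 2*?n+2}. lab m (L @ [p]) v) = fst p mod m + snd p mod m"
      using lab_new1[of m L p] lab_new2[of m L p] by simp
    have d1: "{0, 2*?n+1} \<noteq> {0, 2*?n+2}" "{0, 2*?n+1} \<noteq> {2*?n+1, 2*?n+2}"
      "{0, 2*?n+2} \<noteq> {2*?n+1, 2*?n+2}" by (auto simp: doubleton_eq_iff)
    have "(\<Sum>e\<in>?N. ?f (L @ [p]) e) = ?f (L @ [p]) {0, 2*?n+1} + ?f (L @ [p]) {0, 2*?n+2}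
        + ?f (L @ [p]) {2*?n+1, 2*?n+2}"
      using d1 by (simp only: sum.insert finite.intros insert_iff empty_iff sum.empty simp_thms)
    then show ?thesis by (simp only: s1 s2 s3 mod_add_eq mod_mod_trivial)
  qed
  have h6: "count (em m (L @ [p])) a = count (em m L) a + ?c"
    unfolding em_def by simp
  show ?case by (simp only: h1 h2 h3 h4 h5 h6)
qed

definition hh :: "nat \<Rightarrow> nat \<Rightarrow> nat \<Rightarrow> nat \<Rightarrow> nat" where
  "hh e c k s = (3*e*s + c) mod (3*k)"

lemma mod3: "r < 3 \<Longrightarrow> (3*X + r) mod (3*k) = 3*(X mod k) + (r::nat)"
  by (simp add: mod_mult2_eq)

lemma hh_alt: "hh e c k s = 3*((e*s + c div 3) mod k) + c mod 3"
proof -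
  have "3*e*s + c = 3*(e*s + c div 3) + c mod 3" by simp
  then show ?thesis unfolding hh_def by (metis mod3 mod_less_divisor zero_less_numeral)
qed

lemma hh_range: assumes "0 < k" shows "hh e c k s < 3*k \<and> hh e c k s mod 3 = c mod 3"
proof -
  have "(e * s + c div 3) mod k < k" using assms by simp
  then have "(e * s + c div 3) mod k + 1 \<le> k" by linarith
  moreover have "c mod 3 < 3" by simp
  ultimately have "3 * ((e * s + c div 3) mod k) + c mod 3 < 3 * k" by linarith
  moreover have "(3 * ((e * s + c div 3) mod k) + c mod 3) mod 3 = c mod 3" by simp
  ultimately show ?thesis unfolding hh_alt by blast
qed

lemma l1: "(x + q) mod k = (y + q) mod k \<Longrightarrow> x mod k = y mod (k::nat)"
  by (simp add: nat_mod_eq_iff)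

lemma l2: "coprime e k \<Longrightarrow> (e*s) mod k = (e*s') mod (k::nat) \<Longrightarrow> s < k \<Longrightarrow> s' < k \<Longrightarrow> s = s'"
  by (smt (verit, del_insts) Euclidean_Rings.div_eq_0_iff coprime_commute
    coprime_int_iff mod_eq_self_iff_div_eq_0 mult_mod_cancel_left
    nat_int_comparison(1) of_nat_mult zmod_int)

lemma hh_inj:
  assumes cop: "coprime e k" and s: "s < k" and s': "s' < k" and eq: "hh e c k s = hh e c k s'"
  shows "s = s'"
proof -
  from eq have "(e*s + c div 3) mod k = (e*s' + c div 3) mod k" unfolding hh_alt by simp
  then have "(e*s) mod k = (e*s') mod k" by (rule l1)
  then show ?thesis using l2 cop s s' by blast
qed

lemma hh_inj_on: "coprime e k \<Longrightarrow> j \<le> k \<Longrightarrow> inj_on (hh e c k) {i..<j}"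
  unfolding inj_on_def
proof (intro ballI impI)
  fix x y assume "coprime e k" "j \<le> k" "x \<in> {i..<j}" "y \<in> {i..<j}" "hh e c k x = hh e c k y"
  then show "x = y" using hh_inj[of e k x y c] by auto
qed

lemma Z_card: "card {a::nat. a < 3*k \<and> a mod 3 = r} = k" if "r < 3"
proof -
  have "{a::nat. a < 3*k \<and> a mod 3 = r} = (\<lambda>u. 3*u + r) ` {0..<k}"
  proof (intro set_eqI iffI)
    fix a assume "a \<in> {a::nat. a < 3*k \<and> a mod 3 = r}"
    then have "a = 3*(a div 3) + r" "a div 3 < k" by auto
    then show "a \<in> (\<lambda>u. 3*u + r) ` {0..<k}" by (metis atLeastLessThan_iff image_eqI zero_le)
  next
    fix a assume "a \<in> (\<lambda>u. 3*u + r) ` {0..<k}"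
    then show "a \<in> {a::nat. a < 3*k \<and> a mod 3 = r}" using that by auto
  qed
  moreover have "inj_on (\<lambda>u. 3*u + r) {0..<k}" by (auto simp: inj_on_def)
  ultimately show ?thesis by (simp add: card_image)
qed

lemma hh_surj:
  assumes cop: "coprime e k" and k: "0 < k" and a: "a < 3*k" "a mod 3 = c mod 3"
  shows "\<exists>s<k. hh e c k s = a"
proof -
  let ?Z = "{a::nat. a < 3*k \<and> a mod 3 = c mod 3}"
  have sub: "hh e c k ` {0..<k} \<subseteq> ?Z" using hh_range[OF k] by auto
  have "card (hh e c k ` {0..<k}) = k"
    using hh_inj_on[OF cop, where j=k and i=0 and c=c] by (simp add: card_image)
  moreover have "card ?Z = k" by (rule Z_card) simp
  ultimately have "hh e c k ` {0..<k} = ?Z"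
    using sub by (intro card_subset_eq) auto
  then have "a \<in> hh e c k ` {0..<k}" using a by auto
  then show ?thesis by auto
qed

lemma cnt_range:
  assumes "coprime e k" "j \<le> k"
  shows "count (mset (map (hh e c k) [i..<j])) a = (if \<exists>s. i \<le> s \<and> s < j \<and> hh e c k s = a then 1 else 0)"
proof -
  have "distinct (map (hh e c k) [i..<j])"
    using hh_inj_on[OF assms, where i=i and c=c] by (simp add: distinct_map)
  then have "count (mset (map (hh e c k) [i..<j])) a = (if a \<in> set (map (hh e c k) [i..<j]) then 1 else 0)"
    by (simp add: distinct_count_atmost_1)
  then show ?thesis by auto
qed

lemma cnt_full:
  assumes "coprime e k" "0 < k"
  shows "count (mset (map (hh e c k) [0..<k])) a = (if a < 3*k \<and> a mod 3 = c mod 3 then 1 else 0)"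
  using cnt_range[OF assms(1) order_refl, where i=0 and c=c and a=a] hh_surj[OF assms, where a=a and c=c] hh_range[OF assms(2), where e=e and c=c]
  by auto

lemma cnt_drop1:
  assumes "coprime e k" "0 < k"
  shows "count (mset (map (hh e c k) [1..<k])) a = (if a < 3*k \<and> a mod 3 = c mod 3 \<and> a \<noteq> hh e c k 0 then 1 else 0)"
proof -
  have "(\<exists>s. 1 \<le> s \<and> s < k \<and> hh e c k s = a) \<longleftrightarrow> a < 3*k \<and> a mod 3 = c mod 3 \<and> a \<noteq> hh e c k 0"
  proof
    assume "\<exists>s. 1 \<le> s \<and> s < k \<and> hh e c k s = a"
    then obtain s where s: "1 \<le> s" "s < k" "hh e c k s = a" by blast
    have "a \<noteq> hh e c k 0" using hh_inj[OF assms(1) s(2) assms(2)] s by auto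
    then show "a < 3*k \<and> a mod 3 = c mod 3 \<and> a \<noteq> hh e c k 0" using hh_range[OF assms(2)] s by auto
  next
    assume "a < 3*k \<and> a mod 3 = c mod 3 \<and> a \<noteq> hh e c k 0"
    then obtain s where "s < k" "hh e c k s = a" "a \<noteq> hh e c k 0" using hh_surj[OF assms] by blast
    then show "\<exists>s. 1 \<le> s \<and> s < k \<and> hh e c k s = a" by (intro exI[of _ s]) (cases s, auto)
  qed
  then show ?thesis using cnt_range[OF assms(1) order_refl, where i=1 and c=c and a=a] by simp
qed

lemma cnt_butlast:
  assumes "coprime e k" "0 < k"
  shows "count (mset (map (hh e c k) [0..<k-1])) a = (if a < 3*k \<and> a mod 3 = c mod 3 \<and> a \<noteq> hh e c k (k-1) then 1 else 0)"
proof -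
  have "(\<exists>s. 0 \<le> s \<and> s < k-1 \<and> hh e c k s = a) \<longleftrightarrow> a < 3*k \<and> a mod 3 = c mod 3 \<and> a \<noteq> hh e c k (k-1)"
  proof
    assume "\<exists>s. 0 \<le> s \<and> s < k-1 \<and> hh e c k s = a"
    then obtain s where s: "s < k-1" "hh e c k s = a" by blast
    have "a \<noteq> hh e c k (k-1)" using hh_inj[OF assms(1), of s "k-1" c] s assms(2) by auto
    then show "a < 3*k \<and> a mod 3 = c mod 3 \<and> a \<noteq> hh e c k (k-1)" using hh_range[OF assms(2)] s by auto
  next
    assume "a < 3*k \<and> a mod 3 = c mod 3 \<and> a \<noteq> hh e c k (k-1)"
    then obtain s where "s < k" "hh e c k s = a" "a \<noteq> hh e c k (k-1)" using hh_surj[OF assms] by blast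
    then show "\<exists>s. 0 \<le> s \<and> s < k-1 \<and> hh e c k s = a"
      by (intro exI[of _ s]) (cases "s = k-1", auto)
  qed
  then show ?thesis using cnt_range[OF assms(1), where j="k-1" and i=0 and c=c and a=a] by simp
qed

lemma cnt_sub_le:
  assumes "coprime e k" "0 < k"
  shows "count (mset (map (hh e c k) [i..<k])) a \<le> (if a < 3*k \<and> a mod 3 = c mod 3 then 1 else 0)"
  using cnt_range[OF assms(1) order_refl, where i=i and c=c and a=a] hh_range[OF assms(2), where e=e and c=c] by auto

lemma cnt_sub_last:
  assumes "coprime e k" "i < k"
  shows "count (mset (map (hh e c k) [i..<k])) (hh e c k (k-1)) = 1"
proof -
  have "\<exists>s. i \<le> s \<and> s < k \<and> hh e c k s = hh e c k (k-1)"
    using assms(2) by (intro exI[of _ "k-1"]) auto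
  then show ?thesis using cnt_range[OF assms(1) order_refl, where i=i and c=c and a="hh e c k (k-1)"] by simp
qed

lemma crit:
  assumes m: "0 < m"
  and V: "\<And>a. a < m \<Longrightarrow> q \<le> count (vm m L) a \<and> count (vm m L) a \<le> q + 1"
  and E: "\<And>a. a < m \<Longrightarrow> p \<le> count (em m L) a \<and> count (em m L) a \<le> p + 1"
  shows "Zm_cordial m (friendship_V (length L)) (friendship_E (length L))"
  unfolding Zm_cordial_def
proof (intro exI[of _ "lab m L"] conjI allI impI ballI)
  fix v show "lab m L v < m" using m by (simp add: lab_def)
next
  fix a1 a2 assume a: "a1 < m" "a2 < m"
  show "\<bar>int (card {v \<in> friendship_V (length L). lab m L v = a1}) -
          int (card {v \<in> friendship_V (length L). lab m L v = a2})\<bar> \<le> 1"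
    unfolding card_V using V[OF a(1)] V[OF a(2)] by linarith
  show "\<bar>int (card {e \<in> friendship_E (length L). (\<Sum>v\<in>e. lab m L v) mod m = a1}) -
          int (card {e \<in> friendship_E (length L). (\<Sum>v\<in>e. lab m L v) mod m = a2})\<bar> \<le> 1"
    unfolding card_E using E[OF a(1)] E[OF a(2)] by linarith
qed

definition Ap :: "nat \<Rightarrow> nat \<times> nat" where "Ap s = (3*s, 3*s+1)"
definition Bp :: "nat \<Rightarrow> nat \<times> nat" where "Bp s = (3*s+2, 3*s+3)"
definition Cp :: "nat \<Rightarrow> nat \<times> nat" where "Cp s = (3*s+1, 3*s+2)"

lemma elemA: "\<And>s. fst (Ap s) mod (3*k) = hh 1 0 k s" "\<And>s. snd (Ap s) mod (3*k) = hh 1 1 k s"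
  "\<And>s. (fst (Ap s) + snd (Ap s)) mod (3*k) = hh 2 1 k s"
proof -
  fix s
  show "fst (Ap s) mod (3*k) = hh 1 0 k s" by (simp add: Ap_def hh_def)
  show "snd (Ap s) mod (3*k) = hh 1 1 k s" by (simp add: Ap_def hh_def)
  have "fst (Ap s) + snd (Ap s) = 3*2*s + 1" by (simp add: Ap_def)
  then show "(fst (Ap s) + snd (Ap s)) mod (3*k) = hh 2 1 k s" by (simp only: hh_def)
qed

lemma elemB: "\<And>s. fst (Bp s) mod (3*k) = hh 1 2 k s" "\<And>s. snd (Bp s) mod (3*k) = hh 1 3 k s"
  "\<And>s. (fst (Bp s) + snd (Bp s)) mod (3*k) = hh 2 5 k s"
proof -
  fix s
  have "fst (Bp s) = 3*1*s + 2" by (simp add: Bp_def)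
  then show "fst (Bp s) mod (3*k) = hh 1 2 k s" by (simp only: hh_def)
  have "snd (Bp s) = 3*1*s + 3" by (simp add: Bp_def)
  then show "snd (Bp s) mod (3*k) = hh 1 3 k s" by (simp only: hh_def)
  have "fst (Bp s) + snd (Bp s) = 3*2*s + 5" by (simp add: Bp_def)
  then show "(fst (Bp s) + snd (Bp s)) mod (3*k) = hh 2 5 k s" by (simp only: hh_def)
qed

lemma elemC: "\<And>s. fst (Cp s) mod (3*k) = hh 1 1 k s" "\<And>s. snd (Cp s) mod (3*k) = hh 1 2 k s"
  "\<And>s. (fst (Cp s) + snd (Cp s)) mod (3*k) = hh 2 3 k s"
proof -
  fix s
  have "fst (Cp s) = 3*1*s + 1" by (simp add: Cp_def)
  then show "fst (Cp s) mod (3*k) = hh 1 1 k s" by (simp only: hh_def)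
  have "snd (Cp s) = 3*1*s + 2" by (simp add: Cp_def)
  then show "snd (Cp s) mod (3*k) = hh 1 2 k s" by (simp only: hh_def)
  have "fst (Cp s) + snd (Cp s) = 3*2*s + 3" by (simp add: Cp_def)
  then show "(fst (Cp s) + snd (Cp s)) mod (3*k) = hh 2 3 k s" by (simp only: hh_def)
qed

lemma pA: "map (\<lambda>p. fst p mod (3*k)) (map Ap xs) = map (hh 1 0 k) xs"
          "map (\<lambda>p. snd p mod (3*k)) (map Ap xs) = map (hh 1 1 k) xs"
          "map (\<lambda>p. (fst p + snd p) mod (3*k)) (map Ap xs) = map (hh 2 1 k) xs"
  by (simp_all only: map_map o_def elemA)

lemma pB: "map (\<lambda>p. fst p mod (3*k)) (map Bp xs) = map (hh 1 2 k) xs"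
          "map (\<lambda>p. snd p mod (3*k)) (map Bp xs) = map (hh 1 3 k) xs"
          "map (\<lambda>p. (fst p + snd p) mod (3*k)) (map Bp xs) = map (hh 2 5 k) xs"
  by (simp_all only: map_map o_def elemB)

lemma pC: "map (\<lambda>p. fst p mod (3*k)) (map Cp xs) = map (hh 1 1 k) xs"
          "map (\<lambda>p. snd p mod (3*k)) (map Cp xs) = map (hh 1 2 k) xs"
          "map (\<lambda>p. (fst p + snd p) mod (3*k)) (map Cp xs) = map (hh 2 3 k) xs"
  by (simp_all only: map_map o_def elemC)

lemma hv:
  assumes "0 < k"
  shows "hh 1 0 k 0 = 0" "hh 1 1 k 0 = 1" "hh 2 1 k 0 = 1"
    "hh 1 2 k (k-1) = 3*k-1" "hh 1 3 k (k-1) = 0" "hh 2 5 k (k-1) = 3*k-1"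
proof -
  show "hh 1 0 k 0 = 0" "hh 1 1 k 0 = 1" "hh 2 1 k 0 = 1" using assms by (simp_all add: hh_def)
  have "(1 * (k-1) + 2 div 3) mod k = k - 1" using assms by simp
  then show "hh 1 2 k (k-1) = 3*k-1" unfolding hh_alt using assms by simp
  have "(1 * (k-1) + 3 div 3) mod k = 0" using assms by simp
  then show "hh 1 3 k (k-1) = 0" unfolding hh_alt by simp
  have "2 * (k-1) + 5 div 3 = (k - 1) + k" using assms by simp
  then have "(2 * (k-1) + 5 div 3) mod k = (k - 1) mod k" by (simp only: mod_add_self2)
  then have "(2 * (k-1) + 5 div 3) mod k = k - 1" using assms by simp
  then show "hh 2 5 k (k-1) = 3*k-1" unfolding hh_alt using assms by simp
qed

lemma cnt_sub_not0:
  assumes "coprime e k" "0 < i"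
  shows "count (mset (map (hh e c k) [i..<k])) (hh e c k 0) = 0"
proof -
  have "\<not> (\<exists>s. i \<le> s \<and> s < k \<and> hh e c k s = hh e c k 0)"
  proof
    assume "\<exists>s. i \<le> s \<and> s < k \<and> hh e c k s = hh e c k 0"
    then obtain s where s: "i \<le> s" "s < k" "hh e c k s = hh e c k 0" by blast
    then have "s = 0" using hh_inj[OF assms(1) s(2), of 0 c] by simp
    then show False using s(1) assms(2) by simp
  qed
  then show ?thesis using cnt_range[OF assms(1) order_refl, where i=i and c=c and a="hh e c k 0"] by simp
qed

lemma mod3_cases: "(a::nat) mod 3 = 0 \<or> a mod 3 = 1 \<or> a mod 3 = 2" by arith

lemma vm_count: "count (vm m L) a = (if a = 0 then 1 else 0) + count (mset (map (\<lambda>p. fst p mod m) L)) a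
   + count (mset (map (\<lambda>p. snd p mod m) L)) a"
  by (simp add: vm_def)

lemma em_count: "count (em m L) a = count (mset (map (\<lambda>p. fst p mod m) L)) a
   + count (mset (map (\<lambda>p. snd p mod m) L)) a + count (mset (map (\<lambda>p. (fst p + snd p) mod m) L)) a"
  by (simp add: em_def)

lemma cnt_app: "count (mset (xs @ ys)) a = count (mset xs) a + count (mset ys) a"
  by simp

lemma case_full:
  assumes odd: "odd k"
  shows "Zm_cordial (3*k) (friendship_V (3*k)) (friendship_E (3*k))"
proof -
  have k: "0 < k" using odd by (cases k) auto
  have c1: "coprime 1 k" by simp
  have c2: "coprime 2 k" using odd by simp
  define L where "L = map Ap [0..<k] @ map Bp [0..<k] @ map Cp [0..<k]"
  have len: "length L = 3*k" by (simp add: L_def)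
  have f: "map (\<lambda>p. fst p mod (3*k)) L = map (hh 1 0 k) [0..<k] @ map (hh 1 2 k) [0..<k] @ map (hh 1 1 k) [0..<k]"
    by (simp only: L_def map_append pA pB pC)
  have s: "map (\<lambda>p. snd p mod (3*k)) L = map (hh 1 1 k) [0..<k] @ map (hh 1 3 k) [0..<k] @ map (hh 1 2 k) [0..<k]"
    by (simp only: L_def map_append pA pB pC)
  have t: "map (\<lambda>p. (fst p + snd p) mod (3*k)) L = map (hh 2 1 k) [0..<k] @ map (hh 2 5 k) [0..<k] @ map (hh 2 3 k) [0..<k]"
    by (simp only: L_def map_append pA pB pC)
  note cf = cnt_full[OF c1 k] cnt_full[OF c2 k]
  have V: "2 \<le> count (vm (3*k) L) a \<and> count (vm (3*k) L) a \<le> 2 + 1" if a: "a < 3*k" for a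
  proof -
    have "count (vm (3*k) L) a = (if a = 0 then 1 else 0)
      + (if a < 3*k \<and> a mod 3 = 0 mod 3 then 1 else 0) + (if a < 3*k \<and> a mod 3 = 2 mod 3 then 1 else 0)
      + (if a < 3*k \<and> a mod 3 = 1 mod 3 then 1 else 0) + (if a < 3*k \<and> a mod 3 = 1 mod 3 then 1 else 0)
      + (if a < 3*k \<and> a mod 3 = 3 mod 3 then 1 else 0) + (if a < 3*k \<and> a mod 3 = 2 mod 3 then 1 else 0)"
      by (simp only: vm_count f s cnt_app cf add.assoc)
    then show ?thesis using mod3_cases[of a] a by auto
  qed
  have E: "3 \<le> count (em (3*k) L) a \<and> count (em (3*k) L) a \<le> 3 + 1" if a: "a < 3*k" for a
  proof -
    have "count (em (3*k) L) a =
      (if a < 3*k \<and> a mod 3 = 0 mod 3 then 1 else 0) + (if a < 3*k \<and> a mod 3 = 2 mod 3 then 1 else 0)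
      + (if a < 3*k \<and> a mod 3 = 1 mod 3 then 1 else 0) + ((if a < 3*k \<and> a mod 3 = 1 mod 3 then 1 else 0)
      + (if a < 3*k \<and> a mod 3 = 3 mod 3 then 1 else 0) + (if a < 3*k \<and> a mod 3 = 2 mod 3 then 1 else 0))
      + ((if a < 3*k \<and> a mod 3 = 1 mod 3 then 1 else 0)
      + (if a < 3*k \<and> a mod 3 = 5 mod 3 then 1 else 0) + (if a < 3*k \<and> a mod 3 = 3 mod 3 then 1 else 0))"
      by (simp only: em_count f s t cnt_app cf add.assoc)
    then show ?thesis using mod3_cases[of a] a by auto
  qed
  have "Zm_cordial (3*k) (friendship_V (length L)) (friendship_E (length L))"
    by (rule crit[where q=2 and p=3]) (use k V E in auto)
  then show ?thesis by (simp only: len)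
qed

lemma case_zero:
  assumes odd: "odd k"
  shows "Zm_cordial (3*k) (friendship_V (2*k)) (friendship_E (2*k))"
proof -
  have k: "0 < k" using odd by (cases k) auto
  have c1: "coprime 1 k" by simp
  have c2: "coprime 2 k" using odd by simp
  define L where "L = [(1, 3*k-1)] @ map Ap [1..<k] @ map Bp [0..<k-1] @ [(1, 3*k-1)]"
  have len: "length L = 2*k" using k by (simp add: L_def)
  have m1: "1 mod (3*k) = 1" "(3*k-1) mod (3*k) = 3*k-1" "(1 + (3*k-1)) mod (3*k) = 0" using k by auto
  have f: "map (\<lambda>p. fst p mod (3*k)) L = [1] @ map (hh 1 0 k) [1..<k] @ map (hh 1 2 k) [0..<k-1] @ [1]"
    by (simp only: L_def map_append pA pB list.map fst_conv m1)
  have s: "map (\<lambda>p. snd p mod (3*k)) L = [3*k-1] @ map (hh 1 1 k) [1..<k] @ map (hh 1 3 k) [0..<k-1] @ [3*k-1]"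
    by (simp only: L_def map_append pA pB list.map snd_conv m1)
  have t: "map (\<lambda>p. (fst p + snd p) mod (3*k)) L = [0] @ map (hh 2 1 k) [1..<k] @ map (hh 2 5 k) [0..<k-1] @ [0]"
    by (simp only: L_def map_append pA pB list.map fst_conv snd_conv m1)
  note cf = cnt_drop1[OF c1 k] cnt_drop1[OF c2 k] cnt_butlast[OF c1 k] cnt_butlast[OF c2 k]
  have ne: "3*k-1 \<noteq> 1" "(3*k-1) mod 3 = 2"
  proof -
    obtain n where n: "k = Suc n" using k by (cases k) auto
    show "3*k-1 \<noteq> 1" unfolding n by simp
    have "3*k-1 = 3*n + 2" unfolding n by simp
    then show "(3*k-1) mod 3 = 2" by presburger
  qed
  have V: "1 \<le> count (vm (3*k) L) a \<and> count (vm (3*k) L) a \<le> 1 + 1" if a: "a < 3*k" for a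
    unfolding vm_count f s cnt_app cf hv[OF k] using mod3_cases[of a] a ne by auto
  have E: "2 \<le> count (em (3*k) L) a \<and> count (em (3*k) L) a \<le> 2 + 1" if a: "a < 3*k" for a
    unfolding em_count f s t cnt_app cf hv[OF k] using mod3_cases[of a] a ne by auto
  have "Zm_cordial (3*k) (friendship_V (length L)) (friendship_E (length L))"
    by (rule crit[where q=1 and p=2]) (use k V E in auto)
  then show ?thesis by (simp only: len)
qed

lemma case_mid:
  assumes odd: "odd k" and t: "0 < t" "t < k"
  shows "Zm_cordial (3*k) (friendship_V (2*k+t)) (friendship_E (2*k+t))"
proof -
  have k: "0 < k" using odd by (cases k) auto
  have c1: "coprime 1 k" by simp
  have c2: "coprime 2 k" using odd by simp
  define L where "L = map Ap [0..<k] @ map Bp [0..<k-1] @ [(3*k-1, 1)] @ map Cp [k-t..<k]"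
  have len: "length L = 2*k+t" using k t by (simp add: L_def)
  have m1: "1 mod (3*k) = 1" "(3*k-1) mod (3*k) = 3*k-1" "((3*k-1) + 1) mod (3*k) = 0" using k by auto
  have f: "map (\<lambda>p. fst p mod (3*k)) L = map (hh 1 0 k) [0..<k] @ map (hh 1 2 k) [0..<k-1] @ [3*k-1] @ map (hh 1 1 k) [k-t..<k]"
    by (simp only: L_def map_append pA pB pC list.map fst_conv m1)
  have s: "map (\<lambda>p. snd p mod (3*k)) L = map (hh 1 1 k) [0..<k] @ map (hh 1 3 k) [0..<k-1] @ [1] @ map (hh 1 2 k) [k-t..<k]"
    by (simp only: L_def map_append pA pB pC list.map snd_conv m1)
  have tt: "map (\<lambda>p. (fst p + snd p) mod (3*k)) L = map (hh 2 1 k) [0..<k] @ map (hh 2 5 k) [0..<k-1] @ [0] @ map (hh 2 3 k) [k-t..<k]"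
    by (simp only: L_def map_append pA pB pC list.map fst_conv snd_conv m1)
  note cf = cnt_full[OF c1 k] cnt_full[OF c2 k] cnt_butlast[OF c1 k] cnt_butlast[OF c2 k]
  have ne: "3*k-1 \<noteq> 1" "(3*k-1) mod 3 = 2"
  proof -
    obtain n where n: "k = Suc n" using k by (cases k) auto
    show "3*k-1 \<noteq> 1" unfolding n by simp
    have "3*k-1 = 3*n + 2" unfolding n by simp
    then show "(3*k-1) mod 3 = 2" by presburger
  qed
  have kt: "0 < k - t" "k - t < k" using t by auto
  have sub1: "count (mset (map (hh 1 1 k) [k-t..<k])) a \<le> (if a < 3*k \<and> a mod 3 = 1 mod 3 then 1 else 0)"
    "count (mset (map (hh 1 2 k) [k-t..<k])) a \<le> (if a < 3*k \<and> a mod 3 = 2 mod 3 then 1 else 0)"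
    "count (mset (map (hh 2 3 k) [k-t..<k])) a \<le> (if a < 3*k \<and> a mod 3 = 3 mod 3 then 1 else 0)" for a
    by (rule cnt_sub_le[OF c1 k] cnt_sub_le[OF c2 k])+
  have sub2: "count (mset (map (hh 1 1 k) [k-t..<k])) 1 = 0"
    using cnt_sub_not0[OF c1 kt(1), where c=1] hv[OF k] by simp
  have sub3: "count (mset (map (hh 1 2 k) [k-t..<k])) (3*k-1) = 1"
    using cnt_sub_last[OF c1 kt(2), where c=2] hv[OF k] by simp
  have V: "1 \<le> count (vm (3*k) L) a \<and> count (vm (3*k) L) a \<le> 1 + 1" if a: "a < 3*k" for a
  proof -
    note x = sub1[of a]
    have m: "a mod 3 = 0 \<or> a mod 3 = 1 \<or> a mod 3 = 2" by arith
    moreover have ?thesis if h: "a mod 3 = 0"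
    proof -
      have "a \<noteq> 1" "a \<noteq> 3*k-1" using h ne by auto
      then show ?thesis unfolding vm_count f s cnt_app cf hv[OF k] using a h x by (cases "a = 0") simp_all
    qed
    moreover have ?thesis if h: "a mod 3 = 1"
    proof -
      have "a \<noteq> 0" "a \<noteq> 3*k-1" using h ne by auto
      then show ?thesis unfolding vm_count f s cnt_app cf hv[OF k] using a h x sub2
        by (cases "a = 1") simp_all
    qed
    moreover have ?thesis if h: "a mod 3 = 2"
    proof -
      have "a \<noteq> 0" "a \<noteq> 1" using h ne by auto
      then show ?thesis unfolding vm_count f s cnt_app cf hv[OF k] using a h x sub3
        by (cases "a = 3*k-1") simp_all
    qed
    ultimately show ?thesis by meson
  qed
  have E: "2 \<le> count (em (3*k) L) a \<and> count (em (3*k) L) a \<le> 2 + 1" if a: "a < 3*k" for a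
  proof -
    note x = sub1[of a]
    have m: "a mod 3 = 0 \<or> a mod 3 = 1 \<or> a mod 3 = 2" by arith
    moreover have ?thesis if h: "a mod 3 = 0"
    proof -
      have "a \<noteq> 1" "a \<noteq> 3*k-1" using h ne by auto
      then show ?thesis unfolding em_count f s tt cnt_app cf hv[OF k] using a h x by (cases "a = 0") simp_all
    qed
    moreover have ?thesis if h: "a mod 3 = 1"
    proof -
      have "a \<noteq> 0" "a \<noteq> 3*k-1" using h ne by auto
      then show ?thesis unfolding em_count f s tt cnt_app cf hv[OF k] using a h x sub2
        by (cases "a = 1") simp_all
    qed
    moreover have ?thesis if h: "a mod 3 = 2"
    proof -
      have "a \<noteq> 0" "a \<noteq> 1" using h ne by auto
      then show ?thesis unfolding em_count f s tt cnt_app cf hv[OF k] using a h x sub3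
        by (cases "a = 3*k-1") simp_all
    qed
    ultimately show ?thesis by meson
  qed
  have "Zm_cordial (3*k) (friendship_V (length L)) (friendship_E (length L))"
    by (rule crit[where q=1 and p=2]) (use k V E in auto)
  then show ?thesis by (simp only: len)
qed

theorem theorem12p2:
  fixes m j :: nat
  assumes "odd m" and "3 dvd m" and "2 * m \<le> 3 * j" and "j \<le> m"
  shows "Zm_cordial m (friendship_V j) (friendship_E j)"
proof -
  obtain k where mk: "m = 3*k" using assms(2) by (auto elim: dvdE)
  have odd: "odd k" using assms(1) mk by simp
  have j1: "2*k \<le> j" using assms(3) mk by simp
  have j2: "j \<le> 3*k" using assms(4) mk by simp
  consider (z) "j = 2*k" | (f) "j = 3*k" | (mid) "2*k < j" "j < 3*k" using j1 j2 by linarith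
  then show ?thesis
  proof cases
    case z
    then show ?thesis using case_zero[OF odd] mk by simp
  next
    case f
    then show ?thesis using case_full[OF odd] mk by simp
  next
    case mid
    define t where "t = j - 2*k"
    have t: "0 < t" "t < k" "j = 2*k + t" using mid by (auto simp: t_def)
    show ?thesis using case_mid[OF odd t(1) t(2)] mk t(3) by simp
  qed
qed

end
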